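(* Let $k$ be an algebraically closed field of characteristic $0$, $G$ an algebraic torus and $V$ any finite-dimensional algebraic $G$-module. Then $\mathrm{pol\,ind}(V)=\infty$.
   Context: For $n\in\mathbb N$, $G$ acts diagonally on $V^{\oplus n}$. Polarizations of $f\in k[V]$: $f(\alpha_1v_1+\dots+\alpha_nv_n)=\sum_{(i_1,\dots,i_n)\in\mathbb Z_+^n}\alpha_1^{i_1}\cdots\alpha_n^{i_n}f_{i_1,\dots,i_n}(v_1,\dots,v_n)$; $\mathrm{pol}_nk[V]^G\subseteq k[V^{\oplus n}]^G$ is generated by polarizations of all $f\in k[V]^G$. $\mathcal N_{V^{\oplus n},G}=\{w:F(w)=F(0)\ \forall F\in k[V^{\oplus n}]^G\}$, $\mathcal P_{V^{\oplus n},G}=\{w:h(w)=h(0)\ \forall h\in\mathrm{pol}_nk[V]^G\}$. The polarization index $\mathrm{pol\,ind}(V)$ is the supremum of all $n\in\mathbb N$ with $\mathcal N_{V^{\oplus n},G}=\mathcal P_{V^{\oplus n},G}$. *)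

theory Defs
  imports "HOL-Computational_Algebra.Polynomial" "HOL-Library.Extended_Nat"
begin

definition alg_closed :: "'k::field itself \<Rightarrow> bool" where
  "alg_closed _ \<longleftrightarrow> (\<forall>p :: 'k poly. degree p \<ge> 1 \<longrightarrow> (\<exists>x. poly p x = 0))"

definition polyfun :: "'i set \<Rightarrow> (('i \<Rightarrow> 'k::comm_ring_1) \<Rightarrow> 'k) \<Rightarrow> bool" where
  "polyfun I f \<longleftrightarrow> (\<exists>S c. finite S \<and> (\<forall>e\<in>S. \<forall>i. i \<notin> I \<longrightarrow> e i = (0::nat)) \<and>
      (\<forall>x. f x = (\<Sum>e\<in>S. c e * (\<Prod>i\<in>I. x i ^ e i))))"

text \<open>The algebraic torus (k^*)^r, elements t with t i \<noteq> 0 for i<r (and t i = 1 otherwise);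
  group law is pointwise multiplication, identity is the constant 1.\<close>
definition torus :: "nat \<Rightarrow> (nat \<Rightarrow> 'k::field) set" where
  "torus r = {t. (\<forall>i<r. t i \<noteq> 0) \<and> (\<forall>i\<ge>r. t i = 1)}"

definition torus_char :: "nat \<Rightarrow> (nat \<Rightarrow> int) \<Rightarrow> (nat \<Rightarrow> 'k::field) \<Rightarrow> 'k" where
  "torus_char r a t = (\<Prod>i<r. t i powi a i)"

definition regular_on_torus :: "nat \<Rightarrow> ((nat \<Rightarrow> 'k::field) \<Rightarrow> 'k) \<Rightarrow> bool" where
  "regular_on_torus r g \<longleftrightarrow> (\<exists>S c. finite S \<and> (\<forall>a\<in>S. \<forall>i\<ge>r. a i = 0) \<and>
      (\<forall>t\<in>torus r. g t = (\<Sum>a\<in>S. c a * torus_char r a t)))"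

text \<open>A finite-dimensional algebraic (rational) G-module V = k^m for G = torus r:
  rho t is the m x m matrix of t, entries regular on G, rho a group homomorphism.\<close>
definition rational_rep :: "nat \<Rightarrow> nat \<Rightarrow> ((nat \<Rightarrow> 'k::field) \<Rightarrow> nat \<Rightarrow> nat \<Rightarrow> 'k) \<Rightarrow> bool" where
  "rational_rep r m \<rho> \<longleftrightarrow>
     (\<forall>i<m. \<forall>j<m. regular_on_torus r (\<lambda>t. \<rho> t i j)) \<and>
     (\<forall>i<m. \<forall>j<m. \<rho> (\<lambda>_. 1) i j = (if i = j then 1 else 0)) \<and>
     (\<forall>s\<in>torus r. \<forall>t\<in>torus r. \<forall>i<m. \<forall>j<m.
        \<rho> (\<lambda>l. s l * t l) i j = (\<Sum>l<m. \<rho> s i l * \<rho> t l j))"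

definition act :: "nat \<Rightarrow> ((nat \<Rightarrow> 'k::field) \<Rightarrow> nat \<Rightarrow> nat \<Rightarrow> 'k) \<Rightarrow> (nat \<Rightarrow> 'k) \<Rightarrow> (nat \<Rightarrow> 'k) \<Rightarrow> (nat \<Rightarrow> 'k)" where
  "act m \<rho> t v = (\<lambda>i. \<Sum>j<m. \<rho> t i j * v j)"

text \<open>V^{\<oplus>n}: points w :: nat \<times> nat => k, w (p,i) = i-th coordinate of the p-th summand.\<close>
definition dsum_index :: "nat \<Rightarrow> nat \<Rightarrow> (nat \<times> nat) set" where
  "dsum_index n m = {..<n} \<times> {..<m}"

definition diag_act :: "nat \<Rightarrow> ((nat \<Rightarrow> 'k::field) \<Rightarrow> nat \<Rightarrow> nat \<Rightarrow> 'k) \<Rightarrow> (nat \<Rightarrow> 'k) \<Rightarrow> (nat \<times> nat \<Rightarrow> 'k) \<Rightarrow> (nat \<times> nat \<Rightarrow> 'k)" where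
  "diag_act m \<rho> t w = (\<lambda>(p, i). \<Sum>j<m. \<rho> t i j * w (p, j))"

definition invariants_V :: "nat \<Rightarrow> nat \<Rightarrow> ((nat \<Rightarrow> 'k::field) \<Rightarrow> nat \<Rightarrow> nat \<Rightarrow> 'k) \<Rightarrow> ((nat \<Rightarrow> 'k) \<Rightarrow> 'k) set" where
  "invariants_V r m \<rho> = {f. polyfun {..<m} f \<and> (\<forall>t\<in>torus r. \<forall>v. f (act m \<rho> t v) = f v)}"

definition invariants :: "nat \<Rightarrow> nat \<Rightarrow> ((nat \<Rightarrow> 'k::field) \<Rightarrow> nat \<Rightarrow> nat \<Rightarrow> 'k) \<Rightarrow> nat \<Rightarrow> ((nat \<times> nat \<Rightarrow> 'k) \<Rightarrow> 'k) set" where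
  "invariants r m \<rho> n = {F. polyfun (dsum_index n m) F \<and> (\<forall>t\<in>torus r. \<forall>w. F (diag_act m \<rho> t w) = F w)}"

text \<open>Polarizations: f(\<alpha>_1 v_1 + ... + \<alpha>_n v_n) = \<Sum>_e \<alpha>^e f_e(v_1,...,v_n);
  pol_coeff m n f w is the (unique, finitely supported) coefficient family for fixed w.\<close>
definition pol_coeff :: "nat \<Rightarrow> nat \<Rightarrow> ((nat \<Rightarrow> 'k::field) \<Rightarrow> 'k) \<Rightarrow> (nat \<times> nat \<Rightarrow> 'k) \<Rightarrow> (nat \<Rightarrow> nat) \<Rightarrow> 'k" where
  "pol_coeff m n f w = (THE c. finite {e. c e \<noteq> 0} \<and> (\<forall>e. c e \<noteq> 0 \<longrightarrow> (\<forall>j\<ge>n. e j = 0)) \<and>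
      (\<forall>\<alpha>::nat \<Rightarrow> 'k. f (\<lambda>i. \<Sum>j<n. \<alpha> j * w (j, i)) =
                  (\<Sum>e\<in>{e. c e \<noteq> 0}. c e * (\<Prod>j<n. \<alpha> j ^ e j))))"

definition polarizations :: "nat \<Rightarrow> nat \<Rightarrow> ((nat \<Rightarrow> 'k::field) \<Rightarrow> nat \<Rightarrow> nat \<Rightarrow> 'k) \<Rightarrow> nat \<Rightarrow> ((nat \<times> nat \<Rightarrow> 'k) \<Rightarrow> 'k) set" where
  "polarizations r m \<rho> n =
     {(\<lambda>w. pol_coeff m n f w e) | f e. f \<in> invariants_V r m \<rho> \<and> (\<forall>j\<ge>n. e j = 0)}"

inductive_set gen_alg :: "('x \<Rightarrow> 'k::field) set \<Rightarrow> ('x \<Rightarrow> 'k) set" for S where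
  gen: "h \<in> S \<Longrightarrow> h \<in> gen_alg S"
| const: "(\<lambda>_. c) \<in> gen_alg S"
| add: "g \<in> gen_alg S \<Longrightarrow> h \<in> gen_alg S \<Longrightarrow> (\<lambda>x. g x + h x) \<in> gen_alg S"
| mult: "g \<in> gen_alg S \<Longrightarrow> h \<in> gen_alg S \<Longrightarrow> (\<lambda>x. g x * h x) \<in> gen_alg S"

definition dsum_points :: "nat \<Rightarrow> nat \<Rightarrow> (nat \<times> nat \<Rightarrow> 'k::field) set" where
  "dsum_points n m = {w. \<forall>x. x \<notin> dsum_index n m \<longrightarrow> w x = 0}"

definition nullcone :: "nat \<Rightarrow> nat \<Rightarrow> ((nat \<Rightarrow> 'k::field) \<Rightarrow> nat \<Rightarrow> nat \<Rightarrow> 'k) \<Rightarrow> nat \<Rightarrow> (nat \<times> nat \<Rightarrow> 'k) set" where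
  "nullcone r m \<rho> n = {w \<in> dsum_points n m. \<forall>F\<in>invariants r m \<rho> n. F w = F (\<lambda>_. 0)}"

definition pol_nullcone :: "nat \<Rightarrow> nat \<Rightarrow> ((nat \<Rightarrow> 'k::field) \<Rightarrow> nat \<Rightarrow> nat \<Rightarrow> 'k) \<Rightarrow> nat \<Rightarrow> (nat \<times> nat \<Rightarrow> 'k) set" where
  "pol_nullcone r m \<rho> n =
     {w \<in> dsum_points n m. \<forall>h\<in>gen_alg (polarizations r m \<rho> n). h w = h (\<lambda>_. 0)}"

definition pol_ind :: "nat \<Rightarrow> nat \<Rightarrow> ((nat \<Rightarrow> 'k::field) \<Rightarrow> nat \<Rightarrow> nat \<Rightarrow> 'k) \<Rightarrow> enat" where
  "pol_ind r m \<rho> = Sup {enat n | n. n \<ge> 1 \<and> nullcone r m \<rho> n = pol_nullcone r m \<rho> n}"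

end

theory Submission
  imports Defs
begin

lemma power_int_sum:
  fixes x :: "'k::field"
  assumes "x \<noteq> 0" "finite A"
  shows "x powi (\<Sum>a\<in>A. f a) = (\<Prod>a\<in>A. x powi f a)"
  using assms(2) by (induction A rule: finite_induct) (auto simp: power_int_add assms(1))

lemma laurent_zero:
  fixes g :: "int \<Rightarrow> 'k::field_char_0"
  assumes fin: "finite B" and z: "\<And>s::'k. s \<noteq> 0 \<Longrightarrow> (\<Sum>b\<in>B. g b * s powi b) = 0"
  shows "\<forall>b\<in>B. g b = 0"
proof -
  define N where "N = (\<Sum>b\<in>B. nat (- b))"
  have bN: "b + int N \<ge> 0" if "b \<in> B" for b
  proof -
    have "nat (-b) \<le> N" unfolding N_def using member_le_sum[of b B "\<lambda>b. nat (-b)"] that fin by auto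
    then show ?thesis by linarith
  qed
  define p where "p = (\<Sum>b\<in>B. monom (g b) (nat (b + int N)))"
  have "poly p s = 0" if "s \<noteq> 0" for s
  proof -
    have "poly p s = (\<Sum>b\<in>B. g b * s ^ nat (b + int N))"
      unfolding p_def by (simp add: poly_sum poly_monom)
    also have "\<dots> = (\<Sum>b\<in>B. g b * s powi b * s ^ N)"
    proof (rule sum.cong[OF refl])
      fix b assume "b \<in> B"
      have "s ^ nat (b + int N) = s powi (b + int N)" using bN[OF \<open>b\<in>B\<close>]
        by (simp add: power_int_nonneg_exp)
      also have "\<dots> = s powi b * s ^ N" using that by (simp add: power_int_add)
      finally show "g b * s ^ nat (b + int N) = g b * s powi b * s ^ N" by simp
    qed
    also have "\<dots> = (\<Sum>b\<in>B. g b * s powi b) * s ^ N" by (simp add: sum_distrib_right)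
    also have "\<dots> = 0" using z[OF that] by simp
    finally show ?thesis .
  qed
  have "p = 0"
  proof (rule ccontr)
    assume "p \<noteq> 0"
    then have "finite {x. poly p x = 0}" by (rule poly_roots_finite)
    moreover have "UNIV - {0} \<subseteq> {x. poly p x = 0}" using \<open>\<And>s. s \<noteq> 0 \<Longrightarrow> poly p s = 0\<close> by auto
    ultimately have "finite (UNIV - {0::'k})" by (rule finite_subset[rotated])
    then show False using infinite_UNIV_char_0[where 'a='k] by simp
  qed
  show ?thesis
  proof
    fix b assume b: "b \<in> B"
    have "coeff p (nat (b + int N)) = (\<Sum>b'\<in>B. if nat (b' + int N) = nat (b + int N) then g b' else 0)"
      unfolding p_def by (simp add: coeff_sum coeff_monom)
    also have "\<dots> = (\<Sum>b'\<in>B. if b' = b then g b' else 0)"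
      by (rule sum.cong[OF refl]) (use bN b eq_nat_nat_iff in auto)
    also have "\<dots> = g b" using b fin by simp
    finally show "g b = 0" using \<open>p = 0\<close> by simp
  qed
qed

lemma one_in_torus: "(\<lambda>_. 1) \<in> torus r"
  by (simp add: torus_def)

lemma torus_char_one: "torus_char r a (\<lambda>_. 1) = 1"
  by (simp add: torus_char_def)

lemma torus_char_Suc:
  "torus_char (Suc r) a t = torus_char r a t * t r powi a r"
  by (simp add: torus_char_def)

lemma torus_char_cong:
  assumes "\<And>i. i < r \<Longrightarrow> a i = a' i" "\<And>i. i < r \<Longrightarrow> t i = t' i"
  shows "torus_char r a t = torus_char r a' t'"
  unfolding torus_char_def by (rule prod.cong) (use assms in auto)

lemma char_indep:
  fixes c :: "(nat \<Rightarrow> int) \<Rightarrow> 'k::field_char_0"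
  assumes "finite S" "\<forall>a\<in>S. \<forall>i\<ge>r. a i = 0"
    "\<forall>t\<in>torus r. (\<Sum>a\<in>S. c a * torus_char r a t) = 0"
  shows "\<forall>a\<in>S. c a = 0"
  using assms
proof (induction r arbitrary: S c)
  case 0
  then have S0: "S \<subseteq> {\<lambda>_. 0}" by auto
  have "(\<Sum>a\<in>S. c a) = 0" using 0(3) one_in_torus[of 0] by (auto simp: torus_char_def)
  show ?case
  proof
    fix a assume "a \<in> S"
    then have "a = (\<lambda>_. 0)" using S0 by (simp add: subset_iff)
    have "S = {a}"
    proof (rule equalityI)
      show "S \<subseteq> {a}" using S0 \<open>a = (\<lambda>_. 0)\<close> by simp
      show "{a} \<subseteq> S" using \<open>a \<in> S\<close> by simp
    qed
    show "c a = 0" using \<open>(\<Sum>a\<in>S. c a) = 0\<close> unfolding \<open>S = {a}\<close> by simp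
  qed
next
  case (Suc r)
  define B where "B = (\<lambda>a. a r) ` S"
  have finB: "finite B" using Suc.prems(1) B_def by simp
  define Sb where "Sb b = (\<lambda>a. a(r:=0)) ` {a\<in>S. a r = b}" for b
  define cb where "cb b a' = c (a'(r:=b))" for b a'
  have key: "\<forall>b\<in>B. (\<Sum>a\<in>{a\<in>S. a r = b}. c a * torus_char r (a(r:=0)) t') = 0" if t': "t' \<in> torus r" for t'
  proof -
    have L: "(\<Sum>b\<in>B. (\<Sum>a\<in>{a\<in>S. a r = b}. c a * torus_char r (a(r:=0)) t') * s powi b) = 0"
      if s: "s \<noteq> 0" for s
    proof -
      define t where "t = t'(r:=s)"
      have tT: "t \<in> torus (Suc r)" using t' s unfolding t_def torus_def
        by (auto simp: less_Suc_eq)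
      have "0 = (\<Sum>a\<in>S. c a * torus_char (Suc r) a t)" using Suc.prems(3) tT by simp
      also have "\<dots> = (\<Sum>a\<in>S. c a * torus_char r (a(r:=0)) t' * s powi (a r))"
      proof (rule sum.cong[OF refl])
        fix a assume "a \<in> S"
        have "torus_char r a t = torus_char r (a(r:=0)) t'"
          by (rule torus_char_cong) (auto simp: t_def)
        then show "c a * torus_char (Suc r) a t = c a * torus_char r (a(r:=0)) t' * s powi (a r)"
          by (simp add: torus_char_Suc t_def)
      qed
      also have "\<dots> = (\<Sum>b\<in>B. \<Sum>a\<in>{a\<in>S. a r = b}. c a * torus_char r (a(r:=0)) t' * s powi (a r))"
        unfolding B_def by (rule sum.image_gen[OF Suc.prems(1)])
      also have "\<dots> = (\<Sum>b\<in>B. (\<Sum>a\<in>{a\<in>S. a r = b}. c a * torus_char r (a(r:=0)) t') * s powi b)"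
        by (rule sum.cong[OF refl]) (simp add: sum_distrib_right)
      finally show ?thesis by simp
    qed
    show ?thesis by (rule laurent_zero[OF finB]) (rule L)
  qed
  show ?case
  proof
    fix a0 assume a0: "a0 \<in> S"
    define b where "b = a0 r"
    have inj: "inj_on (\<lambda>a. a(r:=0)) {a\<in>S. a r = b}"
    proof (rule inj_onI)
      fix x y assume x: "x \<in> {a\<in>S. a r = b}" and y: "y \<in> {a\<in>S. a r = b}" and e: "x(r:=0) = y(r:=0)"
      show "x = y"
      proof
        fix i show "x i = y i"
        proof (cases "i = r")
          case True then show ?thesis using x y by simp
        next
          case False then show ?thesis using fun_cong[OF e, of i] by simp
        qed
      qed
    qed
    have "\<forall>a'\<in>Sb b. cb b a' = 0"
    proof (rule Suc.IH)
      show "finite (Sb b)" unfolding Sb_def using Suc.prems(1) by simp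
      show "\<forall>a\<in>Sb b. \<forall>i\<ge>r. a i = 0" unfolding Sb_def using Suc.prems(2) by auto
      show "\<forall>t\<in>torus r. (\<Sum>a\<in>Sb b. cb b a * torus_char r a t) = 0"
      proof
        fix t' :: "nat \<Rightarrow> 'k" assume t': "t' \<in> torus r"
        have bB: "b \<in> B" using a0 b_def B_def by auto
        have "(\<Sum>a\<in>Sb b. cb b a * torus_char r a t') = (\<Sum>a\<in>{a\<in>S. a r = b}. cb b (a(r:=0)) * torus_char r (a(r:=0)) t')"
          unfolding Sb_def by (rule sum.reindex[OF inj, unfolded comp_def])
        also have "\<dots> = (\<Sum>a\<in>{a\<in>S. a r = b}. c a * torus_char r (a(r:=0)) t')"
          by (rule sum.cong[OF refl]) (auto simp: cb_def)
        also have "\<dots> = 0" using key[OF t'] bB by blast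
        finally show "(\<Sum>a\<in>Sb b. cb b a * torus_char r a t') = 0" .
      qed
    qed
    moreover have "a0(r:=0) \<in> Sb b" unfolding Sb_def using a0 b_def by auto
    ultimately have "cb b (a0(r:=0)) = 0" by blast
    then show "c a0 = 0" by (simp add: cb_def b_def)
  qed
qed


lemma polyfun_local:
  assumes "polyfun I f" "\<And>i. i \<in> I \<Longrightarrow> x i = y i"
  shows "f x = f y"
proof -
  obtain S c where "\<forall>x. f x = (\<Sum>e\<in>S. c e * (\<Prod>i\<in>I. x i ^ e i))"
    using assms(1) unfolding polyfun_def by blast
  then show ?thesis using assms(2) by simp
qed

lemma polyfun_monom:
  assumes "\<And>i. i \<notin> I \<Longrightarrow> e i = 0"
  shows "polyfun I (\<lambda>x. (a::'k::comm_ring_1) * (\<Prod>i\<in>I. x i ^ e i))"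
  unfolding polyfun_def
  by (rule exI[of _ "{e}"], rule exI[of _ "\<lambda>_. a"]) (use assms in auto)

lemma polyfun_const: "polyfun I (\<lambda>x. (a::'k::comm_ring_1))"
  using polyfun_monom[of I "\<lambda>_. 0" a] by simp

lemma polyfun_add:
  fixes f g :: "('i \<Rightarrow> 'k::comm_ring_1) \<Rightarrow> 'k"
  assumes "polyfun I f" "polyfun I g"
  shows "polyfun I (\<lambda>x. f x + g x)"
proof -
  obtain S1 c1 where 1: "finite S1" "\<forall>e\<in>S1. \<forall>i. i \<notin> I \<longrightarrow> e i = 0"
    "\<forall>x. f x = (\<Sum>e\<in>S1. c1 e * (\<Prod>i\<in>I. x i ^ e i))"
    using assms(1) unfolding polyfun_def by blast
  obtain S2 c2 where 2: "finite S2" "\<forall>e\<in>S2. \<forall>i. i \<notin> I \<longrightarrow> e i = 0"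
    "\<forall>x. g x = (\<Sum>e\<in>S2. c2 e * (\<Prod>i\<in>I. x i ^ e i))"
    using assms(2) unfolding polyfun_def by blast
  define c where "c e = (if e \<in> S1 then c1 e else 0) + (if e \<in> S2 then c2 e else 0)" for e
  show ?thesis unfolding polyfun_def
  proof (intro exI conjI allI)
    show "finite (S1 \<union> S2)" using 1 2 by simp
    show "\<forall>e\<in>S1 \<union> S2. \<forall>i. i \<notin> I \<longrightarrow> e i = 0" using 1 2 by blast
    fix x :: "'i \<Rightarrow> 'k"
    let ?M = "\<lambda>e. (\<Prod>i\<in>I. x i ^ e i)"
    have "(\<Sum>e\<in>S1 \<union> S2. c e * ?M e) =
        (\<Sum>e\<in>S1 \<union> S2. (if e \<in> S1 then c1 e * ?M e else 0)) + (\<Sum>e\<in>S1 \<union> S2. (if e \<in> S2 then c2 e * ?M e else 0))"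
      unfolding sum.distrib[symmetric] by (rule sum.cong[OF refl]) (auto simp: c_def distrib_right)
    also have "\<dots> = (\<Sum>e\<in>(S1 \<union> S2) \<inter> S1. c1 e * ?M e) + (\<Sum>e\<in>(S1 \<union> S2) \<inter> S2. c2 e * ?M e)"
      using 1(1) 2(1) by (simp only: sum.inter_restrict[OF finite_UnI[OF 1(1) 2(1)]])
    also have "\<dots> = f x + g x" using 1(3) 2(3) by (simp add: Int_absorb1)
    finally show "f x + g x = (\<Sum>e\<in>S1 \<union> S2. c e * ?M e)" by simp
  qed
qed

lemma polyfun_sum:
  fixes f :: "'a \<Rightarrow> ('i \<Rightarrow> 'k::comm_ring_1) \<Rightarrow> 'k"
  assumes "\<And>a. a \<in> A \<Longrightarrow> polyfun I (f a)"
  shows "polyfun I (\<lambda>x. \<Sum>a\<in>A. f a x)"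
proof (cases "finite A")
  case True
  then show ?thesis using assms
  proof (induction A rule: finite_induct)
    case empty then show ?case using polyfun_const[of I 0] by simp
  next
    case (insert a A)
    then show ?case using polyfun_add[of I "f a" "\<lambda>x. \<Sum>a\<in>A. f a x"] by simp
  qed
next
  case False then show ?thesis using polyfun_const[of I 0] by simp
qed

lemma polyfun_mult:
  fixes f g :: "('i \<Rightarrow> 'k::comm_ring_1) \<Rightarrow> 'k"
  assumes "polyfun I f" "polyfun I g"
  shows "polyfun I (\<lambda>x. f x * g x)"
proof -
  obtain S1 c1 where 1: "finite S1" "\<forall>e\<in>S1. \<forall>i. i \<notin> I \<longrightarrow> e i = 0"
    "\<forall>x. f x = (\<Sum>e\<in>S1. c1 e * (\<Prod>i\<in>I. x i ^ e i))"
    using assms(1) unfolding polyfun_def by blast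
  obtain S2 c2 where 2: "finite S2" "\<forall>e\<in>S2. \<forall>i. i \<notin> I \<longrightarrow> e i = 0"
    "\<forall>x. g x = (\<Sum>e\<in>S2. c2 e * (\<Prod>i\<in>I. x i ^ e i))"
    using assms(2) unfolding polyfun_def by blast
  have eq: "f x * g x = (\<Sum>e1\<in>S1. \<Sum>e2\<in>S2. (c1 e1 * c2 e2) * (\<Prod>i\<in>I. x i ^ (e1 i + e2 i)))" for x
  proof -
    have "f x * g x = (\<Sum>e1\<in>S1. c1 e1 * (\<Prod>i\<in>I. x i ^ e1 i)) * (\<Sum>e2\<in>S2. c2 e2 * (\<Prod>i\<in>I. x i ^ e2 i))"
      using 1(3) 2(3) by simp
    also have "\<dots> = (\<Sum>e1\<in>S1. \<Sum>e2\<in>S2. (c1 e1 * (\<Prod>i\<in>I. x i ^ e1 i)) * (c2 e2 * (\<Prod>i\<in>I. x i ^ e2 i)))"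
      by (rule sum_product)
    also have "\<dots> = (\<Sum>e1\<in>S1. \<Sum>e2\<in>S2. (c1 e1 * c2 e2) * (\<Prod>i\<in>I. x i ^ (e1 i + e2 i)))"
      by (rule sum.cong[OF refl], rule sum.cong[OF refl]) (simp add: power_add prod.distrib algebra_simps)
    finally show ?thesis .
  qed
  have "polyfun I (\<lambda>x. \<Sum>e1\<in>S1. \<Sum>e2\<in>S2. (c1 e1 * c2 e2) * (\<Prod>i\<in>I. x i ^ (e1 i + e2 i)))"
  proof (rule polyfun_sum)
    fix e1 assume e1: "e1 \<in> S1"
    show "polyfun I (\<lambda>x. \<Sum>e2\<in>S2. (c1 e1 * c2 e2) * (\<Prod>i\<in>I. x i ^ (e1 i + e2 i)))"
    proof (rule polyfun_sum)
      fix e2 assume e2: "e2 \<in> S2"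
      show "polyfun I (\<lambda>x. (c1 e1 * c2 e2) * (\<Prod>i\<in>I. x i ^ (e1 i + e2 i)))"
        using polyfun_monom[of I "\<lambda>i. e1 i + e2 i" "c1 e1 * c2 e2"] 1(2) 2(2) e1 e2 by simp
    qed
  qed
  then show ?thesis unfolding eq .
qed

lemma polyfun_var:
  assumes "finite I" "j \<in> I"
  shows "polyfun I (\<lambda>x::'i \<Rightarrow> 'k::comm_ring_1. x j)"
proof -
  have P: "polyfun I (\<lambda>x::'i \<Rightarrow> 'k. 1 * (\<Prod>i\<in>I. x i ^ (if i = j then 1 else 0)))"
    by (rule polyfun_monom) (use assms in auto)
  have eq: "(\<lambda>x::'i \<Rightarrow> 'k. 1 * (\<Prod>i\<in>I. x i ^ (if i = j then 1 else 0))) = (\<lambda>x. x j)"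
  proof
    fix x :: "'i \<Rightarrow> 'k"
    have "(\<Prod>i\<in>I. x i ^ (if i = j then 1 else 0)) = (\<Prod>i\<in>I. if i = j then x i else 1)"
      by (rule prod.cong) auto
    also have "\<dots> = x j" using assms by simp
    finally show "1 * (\<Prod>i\<in>I. x i ^ (if i = j then 1 else 0)) = x j" by simp
  qed
  show ?thesis using P unfolding eq .
qed

lemma polyfun_prod:
  fixes f :: "'a \<Rightarrow> ('i \<Rightarrow> 'k::comm_ring_1) \<Rightarrow> 'k"
  assumes "\<And>a. a \<in> A \<Longrightarrow> polyfun I (f a)"
  shows "polyfun I (\<lambda>x. \<Prod>a\<in>A. f a x)"
proof (cases "finite A")
  case True
  then show ?thesis using assms
  proof (induction A rule: finite_induct)
    case empty then show ?case using polyfun_const[of I 1] by simp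
  next
    case (insert a A)
    then show ?case using polyfun_mult[of I "f a" "\<lambda>x. \<Prod>a\<in>A. f a x"] by simp
  qed
next
  case False then show ?thesis using polyfun_const[of I 1] by simp
qed

lemma polyfun_power:
  fixes f :: "('i \<Rightarrow> 'k::comm_ring_1) \<Rightarrow> 'k"
  assumes "polyfun I f"
  shows "polyfun I (\<lambda>x. f x ^ n)"
  using polyfun_prod[of "{..<n}" I "\<lambda>_. f"] assms by simp

lemma polyfun_compose:
  fixes F :: "('j \<Rightarrow> 'k::comm_ring_1) \<Rightarrow> 'k" and g :: "'j \<Rightarrow> ('i \<Rightarrow> 'k) \<Rightarrow> 'k"
  assumes "polyfun J F" "\<And>j. j \<in> J \<Longrightarrow> polyfun I (g j)"
  shows "polyfun I (\<lambda>x. F (\<lambda>j. g j x))"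
proof -
  obtain S c where 1: "finite S" "\<forall>y. F y = (\<Sum>e\<in>S. c e * (\<Prod>j\<in>J. y j ^ e j))"
    using assms(1) unfolding polyfun_def by blast
  have "polyfun I (\<lambda>x. \<Sum>e\<in>S. c e * (\<Prod>j\<in>J. g j x ^ e j))"
    by (intro polyfun_sum polyfun_mult polyfun_const polyfun_prod polyfun_power assms(2))
  then show ?thesis using 1(2) by simp
qed

lemma polyfun_lin:
  fixes a :: "'i \<Rightarrow> 'k::comm_ring_1"
  assumes "finite I" "A \<subseteq> I"
  shows "polyfun I (\<lambda>x. \<Sum>i\<in>A. a i * x i)"
  by (intro polyfun_sum polyfun_mult polyfun_const polyfun_var assms(1)) (use assms in auto)


lemma mono_indep:
  fixes d :: "(nat \<Rightarrow> nat) \<Rightarrow> 'k::field_char_0"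
  assumes fin: "finite U" and supp: "\<forall>e\<in>U. \<forall>j\<ge>n. e j = 0"
    and z: "\<And>\<alpha>::nat \<Rightarrow> 'k. (\<Sum>e\<in>U. d e * (\<Prod>j<n. \<alpha> j ^ e j)) = 0"
  shows "\<forall>e\<in>U. d e = 0"
proof -
  define h where "h e = (\<lambda>j. int (e j))" for e :: "nat \<Rightarrow> nat"
  define d' where "d' a = d (\<lambda>j. nat (a j))" for a :: "nat \<Rightarrow> int"
  have hinv: "(\<lambda>j. nat (h e j)) = e" for e by (simp add: h_def)
  have inj: "inj_on h U" by (metis hinv inj_onI)
  have "\<forall>a\<in>h ` U. d' a = 0"
  proof (rule char_indep)
    show "finite (h ` U)" using fin by simp
    show "\<forall>a\<in>h ` U. \<forall>i\<ge>n. a i = 0" using supp by (auto simp: h_def)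
    show "\<forall>t\<in>torus n. (\<Sum>a\<in>h ` U. d' a * torus_char n a t) = 0"
    proof
      fix t :: "nat \<Rightarrow> 'k" assume "t \<in> torus n"
      have "(\<Sum>a\<in>h ` U. d' a * torus_char n a t) = (\<Sum>e\<in>U. d' (h e) * torus_char n (h e) t)"
        by (rule sum.reindex[OF inj, unfolded comp_def])
      also have "\<dots> = (\<Sum>e\<in>U. d e * (\<Prod>j<n. t j ^ e j))"
        by (rule sum.cong[OF refl]) (simp add: d'_def hinv torus_char_def h_def)
      also have "\<dots> = 0" by (rule z)
      finally show "(\<Sum>a\<in>h ` U. d' a * torus_char n a t) = 0" .
    qed
  qed
  then show ?thesis by (simp add: d'_def hinv)
qed

definition lin :: "nat \<Rightarrow> (nat \<times> nat \<Rightarrow> 'k::comm_ring_1) \<Rightarrow> (nat \<Rightarrow> 'k) \<Rightarrow> nat \<Rightarrow> 'k" where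
  "lin n w \<alpha> = (\<lambda>i. \<Sum>j<n. \<alpha> j * w (j, i))"

definition PC :: "nat \<Rightarrow> ((nat \<Rightarrow> 'k::field) \<Rightarrow> 'k) \<Rightarrow> (nat \<times> nat \<Rightarrow> 'k) \<Rightarrow> ((nat \<Rightarrow> nat) \<Rightarrow> 'k) \<Rightarrow> bool" where
  "PC n f w c \<longleftrightarrow> finite {e. c e \<noteq> 0} \<and> (\<forall>e. c e \<noteq> 0 \<longrightarrow> (\<forall>j\<ge>n. e j = 0)) \<and>
      (\<forall>\<alpha>::nat \<Rightarrow> 'k. f (\<lambda>i. \<Sum>j<n. \<alpha> j * w (j, i)) =
                  (\<Sum>e\<in>{e. c e \<noteq> 0}. c e * (\<Prod>j<n. \<alpha> j ^ e j)))"

lemma pol_coeff_PC: "pol_coeff m n f w = (THE c. PC n f w c)"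
  unfolding pol_coeff_def PC_def ..

lemma PC_unique:
  fixes f :: "(nat \<Rightarrow> 'k::field_char_0) \<Rightarrow> 'k"
  assumes "PC n f w c" "PC n f w c'"
  shows "c = c'"
proof -
  define U where "U = {e. c e \<noteq> 0} \<union> {e. c' e \<noteq> 0}"
  have finU: "finite U" using assms unfolding U_def PC_def by simp
  have supp: "\<forall>e\<in>U. \<forall>j\<ge>n. e j = 0" using assms unfolding U_def PC_def by blast
  have "\<forall>e\<in>U. c e - c' e = 0"
  proof (rule mono_indep[OF finU supp])
    fix \<alpha> :: "nat \<Rightarrow> 'k"
    let ?M = "\<lambda>e. (\<Prod>j<n. \<alpha> j ^ e j)"
    have 1: "(\<Sum>e\<in>{e. c e \<noteq> 0}. c e * ?M e) = (\<Sum>e\<in>U. c e * ?M e)"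
      by (rule sum.mono_neutral_left) (use finU in \<open>auto simp: U_def\<close>)
    have 2: "(\<Sum>e\<in>{e. c' e \<noteq> 0}. c' e * ?M e) = (\<Sum>e\<in>U. c' e * ?M e)"
      by (rule sum.mono_neutral_left) (use finU in \<open>auto simp: U_def\<close>)
    have A: "f (\<lambda>i. \<Sum>j<n. \<alpha> j * w (j, i)) = (\<Sum>e\<in>{e. c e \<noteq> 0}. c e * ?M e)"
      using assms(1) unfolding PC_def by blast
    have B: "f (\<lambda>i. \<Sum>j<n. \<alpha> j * w (j, i)) = (\<Sum>e\<in>{e. c' e \<noteq> 0}. c' e * ?M e)"
      using assms(2) unfolding PC_def by blast
    have "(\<Sum>e\<in>{e. c e \<noteq> 0}. c e * ?M e) = (\<Sum>e\<in>{e. c' e \<noteq> 0}. c' e * ?M e)"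
      using trans[OF A[symmetric] B] .
    then show "(\<Sum>e\<in>U. (c e - c' e) * ?M e) = 0"
      unfolding 1 2 by (simp add: sum_subtractf left_diff_distrib)
  qed
  note D = this
  show ?thesis
  proof
    fix e show "c e = c' e"
    proof (cases "e \<in> U")
      case True then show ?thesis using D by simp
    next
      case False then show ?thesis unfolding U_def by simp
    qed
  qed
qed

lemma PC_exists:
  fixes f :: "(nat \<Rightarrow> 'k::field_char_0) \<Rightarrow> 'k"
  assumes "polyfun {..<m} f"
  shows "\<exists>c. PC n f w c"
proof -
  have "polyfun {..<n} (\<lambda>\<alpha>. f (\<lambda>i. \<Sum>j<n. w (j, i) * \<alpha> j))"
    by (rule polyfun_compose[OF assms]) (rule polyfun_lin, auto)
  then obtain S c where S: "finite S" "\<forall>e\<in>S. \<forall>i. i \<notin> {..<n} \<longrightarrow> e i = 0"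
    "\<forall>\<alpha>. f (\<lambda>i. \<Sum>j<n. w (j, i) * \<alpha> j) = (\<Sum>e\<in>S. c e * (\<Prod>j<n. \<alpha> j ^ e j))"
    unfolding polyfun_def by blast
  define c' where "c' e = (if e \<in> S then c e else 0)" for e
  have sub: "{e. c' e \<noteq> 0} \<subseteq> S" by (auto simp: c'_def split: if_splits)
  have "PC n f w c'"
    unfolding PC_def
  proof (intro conjI allI impI)
    show "finite {e. c' e \<noteq> 0}" using sub S(1) finite_subset by blast
    fix e j assume "c' e \<noteq> 0" "n \<le> j"
    then show "e j = 0" using S(2) sub by auto
  next
    fix \<alpha> :: "nat \<Rightarrow> 'k"
    have "f (\<lambda>i. \<Sum>j<n. \<alpha> j * w (j, i)) = f (\<lambda>i. \<Sum>j<n. w (j, i) * \<alpha> j)"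
      by (simp add: mult.commute)
    also have "\<dots> = (\<Sum>e\<in>S. c e * (\<Prod>j<n. \<alpha> j ^ e j))" using S(3) by blast
    also have "\<dots> = (\<Sum>e\<in>{e. c' e \<noteq> 0}. c' e * (\<Prod>j<n. \<alpha> j ^ e j))"
      by (rule sum.mono_neutral_cong_right[OF S(1) sub]) (auto simp: c'_def)
    finally show "f (\<lambda>i. \<Sum>j<n. \<alpha> j * w (j, i)) = (\<Sum>e\<in>{e. c' e \<noteq> 0}. c' e * (\<Prod>j<n. \<alpha> j ^ e j))" .
  qed
  then show ?thesis by blast
qed

lemma pol_coeff_prop:
  fixes f :: "(nat \<Rightarrow> 'k::field_char_0) \<Rightarrow> 'k"
  assumes "polyfun {..<m} f"
  shows "PC n f w (pol_coeff m n f w)"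
proof -
  obtain c where c: "PC n f w c" using PC_exists[OF assms] by blast
  have "PC n f w (THE c. PC n f w c)"
    by (rule theI[where P="PC n f w", OF c], rule PC_unique[OF _ c])
  then show ?thesis unfolding pol_coeff_PC .
qed

lemma pol_coeff_const:
  fixes f :: "(nat \<Rightarrow> 'k::field_char_0) \<Rightarrow> 'k"
  assumes "\<And>\<alpha>. f (\<lambda>i. \<Sum>j<n. \<alpha> j * w (j, i)) = f (\<lambda>_. 0)"
  shows "pol_coeff m n f w = (\<lambda>e. if e = (\<lambda>_. 0) then f (\<lambda>_. 0) else 0)"
proof -
  let ?c = "(\<lambda>e. if e = (\<lambda>_. 0) then f (\<lambda>_. 0) else (0::'k))"
  have c: "PC n f w ?c"
    unfolding PC_def
  proof (intro conjI allI impI)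
    have "{e. ?c e \<noteq> 0} \<subseteq> {\<lambda>_. 0}" by auto
    then show "finite {e. ?c e \<noteq> 0}" using finite_subset by blast
    fix e :: "nat \<Rightarrow> nat" and j assume "?c e \<noteq> 0" "n \<le> j"
    then show "e j = 0" by (auto split: if_splits)
  next
    fix \<alpha> :: "nat \<Rightarrow> 'k"
    show "f (\<lambda>i. \<Sum>j<n. \<alpha> j * w (j, i)) = (\<Sum>e\<in>{e. ?c e \<noteq> 0}. ?c e * (\<Prod>j<n. \<alpha> j ^ e j))"
    proof (cases "f (\<lambda>_. 0) = 0")
      case True
      then have "{e. ?c e \<noteq> 0} = {}" by auto
      then show ?thesis using True assms by simp
    next
      case False
      then have E: "{e. ?c e \<noteq> 0} = {\<lambda>_. 0}" by auto
      show ?thesis unfolding E using assms by simp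
    qed
  qed
  have "(THE c. PC n f w c) = ?c"
    by (rule the_equality[where P="PC n f w", OF c], rule PC_unique[OF _ c])
  then show ?thesis unfolding pol_coeff_PC .
qed


lemma torus_char_mult:
  "torus_char r a (\<lambda>l. s l * t l) = torus_char r a s * torus_char r a (t :: nat \<Rightarrow> 'k::field)"
  unfolding torus_char_def by (simp add: power_int_mult_distrib prod.distrib)

lemma torus_mult: "s \<in> torus r \<Longrightarrow> t \<in> torus r \<Longrightarrow> (\<lambda>l. s l * t l) \<in> torus r"
  unfolding torus_def by simp

lemma weight_decomp:
  fixes \<rho> :: "(nat \<Rightarrow> 'k::field_char_0) \<Rightarrow> nat \<Rightarrow> nat \<Rightarrow> 'k"
  assumes rep: "rational_rep r m \<rho>"
  shows "\<exists>S A. finite S \<and> (\<forall>a\<in>S. \<forall>i\<ge>r. a i = 0) \<and>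
     (\<forall>t\<in>torus r. \<forall>i<m. \<forall>j<m. \<rho> t i j = (\<Sum>a\<in>S. torus_char r a t * A a i j)) \<and>
     (\<forall>i<m. \<forall>j<m. (\<Sum>a\<in>S. A a i j) = (if i = j then 1 else 0)) \<and>
     (\<forall>a\<in>S. \<forall>t\<in>torus r. \<forall>i<m. \<forall>l<m. (\<Sum>j<m. A a i j * \<rho> t j l) = torus_char r a t * A a i l)"
proof -
  have reg: "\<forall>p\<in>{..<m}\<times>{..<m}. \<exists>Sc. finite (fst Sc) \<and> (\<forall>a\<in>fst Sc. \<forall>i\<ge>r. a i = 0) \<and>
      (\<forall>t\<in>torus r. \<rho> t (fst p) (snd p) = (\<Sum>a\<in>fst Sc. snd Sc a * torus_char r a t))"
  proof
    fix p assume "p \<in> {..<m}\<times>{..<m}"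
    then have "regular_on_torus r (\<lambda>t. \<rho> t (fst p) (snd p))" using rep unfolding rational_rep_def by auto
    then obtain S c where "finite S" "\<forall>a\<in>S. \<forall>i\<ge>r. a i = 0"
      "\<forall>t\<in>torus r. \<rho> t (fst p) (snd p) = (\<Sum>a\<in>S. c a * torus_char r a t)"
      unfolding regular_on_torus_def by blast
    then show "\<exists>Sc. finite (fst Sc) \<and> (\<forall>a\<in>fst Sc. \<forall>i\<ge>r. a i = 0) \<and>
      (\<forall>t\<in>torus r. \<rho> t (fst p) (snd p) = (\<Sum>a\<in>fst Sc. snd Sc a * torus_char r a t))"
      by (intro exI[of _ "(S, c)"]) simp
  qed
  obtain F where F: "\<forall>p\<in>{..<m}\<times>{..<m}. finite (fst (F p)) \<and> (\<forall>a\<in>fst (F p). \<forall>i\<ge>r. a i = 0) \<and>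
      (\<forall>t\<in>torus r. \<rho> t (fst p) (snd p) = (\<Sum>a\<in>fst (F p). snd (F p) a * torus_char r a t))"
    using bchoice[OF reg] by blast
  define SS where "SS i j = fst (F (i, j))" for i j
  define CC where "CC i j = snd (F (i, j))" for i j
  define S where "S = (\<Union>i<m. \<Union>j<m. SS i j)"
  define A where "A a i j = (if i < m \<and> j < m \<and> a \<in> SS i j then CC i j a else 0)" for a i j
  have SSfin: "finite (SS i j)" and SSz: "\<forall>a\<in>SS i j. \<forall>l\<ge>r. a l = 0"
    and SSrho: "\<forall>t\<in>torus r. \<rho> t i j = (\<Sum>a\<in>SS i j. CC i j a * torus_char r a t)"
    if "i < m" "j < m" for i j
    using F that unfolding SS_def CC_def by auto
  have finS: "finite S" unfolding S_def using SSfin by simp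
  have Sz: "\<forall>a\<in>S. \<forall>i\<ge>r. a i = 0" unfolding S_def using SSz by blast
  have P1: "\<forall>t\<in>torus r. \<forall>i<m. \<forall>j<m. \<rho> t i j = (\<Sum>a\<in>S. torus_char r a t * A a i j)"
  proof (intro ballI allI impI)
    fix t :: "nat \<Rightarrow> 'k" and i j assume t: "t \<in> torus r" and ij: "i < m" "j < m"
    have sub: "SS i j \<subseteq> S" unfolding S_def using ij by blast
    have "\<rho> t i j = (\<Sum>a\<in>SS i j. CC i j a * torus_char r a t)" using SSrho[OF ij] t by blast
    also have "\<dots> = (\<Sum>a\<in>S. torus_char r a t * A a i j)"
      by (rule sum.mono_neutral_cong_left[OF finS sub]) (auto simp: A_def ij)
    finally show "\<rho> t i j = (\<Sum>a\<in>S. torus_char r a t * A a i j)" .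
  qed
  have P2: "\<forall>i<m. \<forall>j<m. (\<Sum>a\<in>S. A a i j) = (if i = j then 1 else 0)"
  proof (intro allI impI)
    fix i j assume ij: "i < m" "j < m"
    have "(if i = j then 1 else 0) = \<rho> (\<lambda>_. 1) i j" using rep ij unfolding rational_rep_def by simp
    also have "\<dots> = (\<Sum>a\<in>S. torus_char r a (\<lambda>_. 1) * A a i j)"
      using P1 one_in_torus ij by blast
    also have "\<dots> = (\<Sum>a\<in>S. A a i j)" by (simp add: torus_char_one)
    finally show "(\<Sum>a\<in>S. A a i j) = (if i = j then 1 else 0)" by simp
  qed
  have P3: "\<forall>a\<in>S. \<forall>t\<in>torus r. \<forall>i<m. \<forall>l<m. (\<Sum>j<m. A a i j * \<rho> t j l) = torus_char r a t * A a i l"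
  proof (intro ballI allI impI)
    fix a and t :: "nat \<Rightarrow> 'k" and i l assume a: "a \<in> S" and t: "t \<in> torus r" and il: "i < m" "l < m"
    define d where "d b = torus_char r b t * A b i l - (\<Sum>j<m. A b i j * \<rho> t j l)" for b
    have "\<forall>b\<in>S. d b = 0"
    proof (rule char_indep[OF finS Sz], rule ballI)
      fix s :: "nat \<Rightarrow> 'k" assume s: "s \<in> torus r"
      have "(\<Sum>b\<in>S. d b * torus_char r b s) =
          (\<Sum>b\<in>S. torus_char r b (\<lambda>l. s l * t l) * A b i l) - (\<Sum>b\<in>S. torus_char r b s * (\<Sum>j<m. A b i j * \<rho> t j l))"
        unfolding d_def sum_subtractf[symmetric]
        by (rule sum.cong[OF refl]) (simp add: torus_char_mult algebra_simps)
      also have "(\<Sum>b\<in>S. torus_char r b (\<lambda>l. s l * t l) * A b i l) = \<rho> (\<lambda>l. s l * t l) i l"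
        using P1 torus_mult[OF s t] il by simp
      also have "\<dots> = (\<Sum>j<m. \<rho> s i j * \<rho> t j l)"
        using rep s t il unfolding rational_rep_def by blast
      also have "\<dots> = (\<Sum>j<m. (\<Sum>b\<in>S. torus_char r b s * A b i j) * \<rho> t j l)"
        using P1 s il by simp
      also have "\<dots> = (\<Sum>b\<in>S. torus_char r b s * (\<Sum>j<m. A b i j * \<rho> t j l))"
        by (simp add: sum_distrib_right sum_distrib_left mult.assoc sum.swap[of _ "{..<m}"])
      finally show "(\<Sum>b\<in>S. d b * torus_char r b s) = 0" by simp
    qed
    then show "(\<Sum>j<m. A a i j * \<rho> t j l) = torus_char r a t * A a i l" using a by (simp add: d_def)
  qed
  show ?thesis using finS Sz P1 P2 P3 by blast
qed


lemma char_prod: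
  fixes t :: "nat \<Rightarrow> 'k::field"
  assumes t: "t \<in> torus r" and fin: "finite T"
  shows "(\<Prod>b\<in>T. torus_char r b t ^ e b) = torus_char r (\<lambda>i. \<Sum>b\<in>T. int (e b) * b i) t"
proof -
  have "torus_char r (\<lambda>i. \<Sum>b\<in>T. int (e b) * b i) t = (\<Prod>i<r. \<Prod>b\<in>T. (t i powi b i) ^ e b)"
    unfolding torus_char_def
  proof (rule prod.cong[OF refl])
    fix i assume "i \<in> {..<r}"
    then have "t i \<noteq> 0" using t unfolding torus_def by simp
    then have "t i powi (\<Sum>b\<in>T. int (e b) * b i) = (\<Prod>b\<in>T. t i powi (int (e b) * b i))"
      by (rule power_int_sum[OF _ fin])
    also have "\<dots> = (\<Prod>b\<in>T. (t i powi b i) ^ e b)"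
      by (rule prod.cong[OF refl]) (simp add: power_int_mult mult.commute[of "int _"])
    finally show "t i powi (\<Sum>b\<in>T. int (e b) * b i) = (\<Prod>b\<in>T. (t i powi b i) ^ e b)" .
  qed
  also have "\<dots> = (\<Prod>b\<in>T. \<Prod>i<r. (t i powi b i) ^ e b)" by (rule prod.swap)
  also have "\<dots> = (\<Prod>b\<in>T. torus_char r b t ^ e b)"
    by (simp add: torus_char_def prod_power_distrib)
  finally show ?thesis by simp
qed

lemma zero_pow_prod:
  assumes "finite T"
  shows "(\<Prod>b\<in>T. (0::'k::comm_ring_1) ^ e b) = (if \<forall>b\<in>T. e b = 0 then 1 else 0)"
proof (cases "\<forall>b\<in>T. e b = 0")
  case True then show ?thesis by simp
next
  case False
  then obtain b where "b \<in> T" "e b \<noteq> 0" by blast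
  then have "(\<Prod>b\<in>T. (0::'k) ^ e b) = 0"
    by (intro prod_zero[OF assms] bexI[of _ b]) (simp_all add: zero_power)
  then show ?thesis using False by simp
qed

definition c0 :: "'k::comm_ring_1 \<Rightarrow> (nat \<Rightarrow> nat) \<Rightarrow> 'k" where
  "c0 f0 = (\<lambda>e. if e = (\<lambda>_. 0) then f0 else 0)"

lemma sum_c0:
  fixes f0 :: "'k::comm_ring_1"
  shows "(\<Sum>e\<in>{e. c0 f0 e \<noteq> 0}. c0 f0 e * (\<Prod>j<n. \<alpha> j ^ e j)) = f0"
proof (cases "f0 = 0")
  case True
  then have E: "{e. c0 f0 e \<noteq> 0} = {}" by (simp add: c0_def)
  show ?thesis unfolding E using True by simp
next
  case False
  then have E: "{e. c0 f0 e \<noteq> 0} = {\<lambda>_. 0}" by (auto simp: c0_def)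
  show ?thesis unfolding E by (simp add: c0_def)
qed

lemma lin_invariant:
  fixes \<rho> :: "(nat \<Rightarrow> 'k::field_char_0) \<Rightarrow> nat \<Rightarrow> nat \<Rightarrow> 'k"
  assumes f: "f \<in> invariants_V r m \<rho>"
  shows "(\<lambda>w. f (\<lambda>i. \<Sum>j<n. \<alpha> j * w (j, i))) \<in> invariants r m \<rho> n"
proof -
  have pf: "polyfun {..<m} f" using f unfolding invariants_V_def by simp
  have finI: "finite (dsum_index n m)" unfolding dsum_index_def by simp
  have "polyfun (dsum_index n m) (\<lambda>w. f (\<lambda>i. \<Sum>j<n. \<alpha> j * w (j, i)))"
  proof (rule polyfun_compose[OF pf])
    fix i assume "i \<in> {..<m}"
    then show "polyfun (dsum_index n m) (\<lambda>w. \<Sum>j<n. \<alpha> j * w (j, i))"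
      by (intro polyfun_sum polyfun_mult polyfun_const polyfun_var finI) (auto simp: dsum_index_def)
  qed
  moreover have "f (\<lambda>i. \<Sum>j<n. \<alpha> j * diag_act m \<rho> t w (j, i)) = f (\<lambda>i. \<Sum>j<n. \<alpha> j * w (j, i))"
    if t: "t \<in> torus r" for t w
  proof -
    have "(\<lambda>i. \<Sum>j<n. \<alpha> j * diag_act m \<rho> t w (j, i)) = act m \<rho> t (\<lambda>l. \<Sum>j<n. \<alpha> j * w (j, l))"
    proof
      fix i
      have "(\<Sum>j<n. \<alpha> j * diag_act m \<rho> t w (j, i)) = (\<Sum>j<n. \<Sum>l<m. \<alpha> j * (\<rho> t i l * w (j, l)))"
        by (simp add: diag_act_def sum_distrib_left)
      also have "\<dots> = (\<Sum>l<m. \<Sum>j<n. \<rho> t i l * (\<alpha> j * w (j, l)))"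
        by (subst sum.swap) (simp add: algebra_simps)
      also have "\<dots> = act m \<rho> t (\<lambda>l. \<Sum>j<n. \<alpha> j * w (j, l)) i"
        by (simp add: act_def sum_distrib_left)
      finally show "(\<Sum>j<n. \<alpha> j * diag_act m \<rho> t w (j, i)) = act m \<rho> t (\<lambda>l. \<Sum>j<n. \<alpha> j * w (j, l)) i" .
    qed
    then show ?thesis using f t unfolding invariants_V_def by simp
  qed
  ultimately show ?thesis unfolding invariants_def by simp
qed

lemma pol_ind_top:
  assumes "\<And>n. n \<ge> 1 \<Longrightarrow> nullcone r m \<rho> n = pol_nullcone r m \<rho> n"
  shows "pol_ind r m \<rho> = \<infinity>"
proof -
  have "Sup {enat n | n. n \<ge> 1 \<and> nullcone r m \<rho> n = pol_nullcone r m \<rho> n} = (top::enat)"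
  proof (subst Sup_eq_top_iff, intro allI impI)
    fix x :: enat assume "x < top"
    then obtain k where k: "x = enat k" by (cases x) auto
    show "\<exists>i\<in>{enat n | n. n \<ge> 1 \<and> nullcone r m \<rho> n = pol_nullcone r m \<rho> n}. x < i"
      by (rule bexI[of _ "enat (Suc k)"]) (use assms k in auto)
  qed
  then show ?thesis unfolding pol_ind_def by (simp add: top_enat_def)
qed


lemma N_sub_P:
  fixes \<rho> :: "(nat \<Rightarrow> 'k::field_char_0) \<Rightarrow> nat \<Rightarrow> nat \<Rightarrow> 'k"
  assumes w: "w \<in> nullcone r m \<rho> n"
  shows "w \<in> pol_nullcone r m \<rho> n"
proof -
  have dp: "w \<in> dsum_points n m" using w unfolding nullcone_def by simp
  have lc: "f (\<lambda>i. \<Sum>j<n. \<alpha> j * w (j, i)) = f (\<lambda>_. 0)" if f: "f \<in> invariants_V r m \<rho>" for f \<alpha>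
  proof -
    have "\<forall>F\<in>invariants r m \<rho> n. F w = F (\<lambda>_. 0)" using w unfolding nullcone_def by simp
    from bspec[OF this lin_invariant[OF f, where n=n and \<alpha>=\<alpha>]]
    show ?thesis by simp
  qed
  have gen: "h w = h (\<lambda>_. 0)" if "h \<in> gen_alg (polarizations r m \<rho> n)" for h
    using that
  proof induction
    case (gen h)
    then obtain f e where h: "h = (\<lambda>w. pol_coeff m n f w e)" "f \<in> invariants_V r m \<rho>"
      unfolding polarizations_def by blast
    have 1: "pol_coeff m n f w = c0 (f (\<lambda>_. 0))"
      unfolding c0_def by (rule pol_coeff_const) (rule lc[OF h(2)])
    have 2: "pol_coeff m n f (\<lambda>_. 0) = c0 (f (\<lambda>_. 0))"
      unfolding c0_def by (rule pol_coeff_const) simp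
    show ?case using 1 2 h(1) by simp
  qed simp_all
  show ?thesis unfolding pol_nullcone_def using dp gen by blast
qed

lemma P_lin:
  fixes \<rho> :: "(nat \<Rightarrow> 'k::field_char_0) \<Rightarrow> nat \<Rightarrow> nat \<Rightarrow> 'k"
  assumes w: "w \<in> pol_nullcone r m \<rho> n" and f: "f \<in> invariants_V r m \<rho>"
  shows "f (\<lambda>i. \<Sum>j<n. \<alpha> j * w (j, i)) = f (\<lambda>_. 0)"
proof -
  have pf: "polyfun {..<m} f" using f unfolding invariants_V_def by simp
  have PCw: "PC n f w (pol_coeff m n f w)" by (rule pol_coeff_prop[OF pf])
  note PCs = PCw[unfolded PC_def]
  have supp: "\<forall>e. pol_coeff m n f w e \<noteq> 0 \<longrightarrow> (\<forall>j\<ge>n. e j = 0)"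
    using conjunct1[OF conjunct2[OF PCs]] .
  have ident: "\<forall>\<alpha>::nat \<Rightarrow> 'k. f (\<lambda>i. \<Sum>j<n. \<alpha> j * w (j, i)) =
      (\<Sum>e\<in>{e. pol_coeff m n f w e \<noteq> 0}. pol_coeff m n f w e * (\<Prod>j<n. \<alpha> j ^ e j))"
    using conjunct2[OF conjunct2[OF PCs]] .
  have H: "\<forall>h\<in>gen_alg (polarizations r m \<rho> n). h w = h (\<lambda>_. 0)"
    using w unfolding pol_nullcone_def by simp
  have eq: "pol_coeff m n f w = c0 (f (\<lambda>_. 0))"
  proof
    fix e :: "nat \<Rightarrow> nat"
    show "pol_coeff m n f w e = c0 (f (\<lambda>_. 0)) e"
    proof (cases "\<forall>j\<ge>n. e j = 0")
      case True
      then have "(\<lambda>w. pol_coeff m n f w e) \<in> polarizations r m \<rho> n"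
        using f unfolding polarizations_def by blast
      then have "(\<lambda>w. pol_coeff m n f w e) \<in> gen_alg (polarizations r m \<rho> n)"
        by (rule gen_alg.gen)
      then have "pol_coeff m n f w e = pol_coeff m n f (\<lambda>_. 0) e" by (rule bspec[OF H])
      also have "pol_coeff m n f (\<lambda>_. 0) = c0 (f (\<lambda>_. 0))"
        unfolding c0_def by (rule pol_coeff_const) simp
      finally show ?thesis .
    next
      case False
      then obtain j where j: "j \<ge> n" "e j \<noteq> 0" by blast
      have "pol_coeff m n f w e = 0"
      proof (rule ccontr)
        assume "pol_coeff m n f w e \<noteq> 0"
        then have "e j = 0" using supp j(1) by blast
        then show False using j(2) by simp
      qed
      moreover have "e \<noteq> (\<lambda>_. 0)"
      proof
        assume "e = (\<lambda>_. 0)"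
        then show False using j(2) by simp
      qed
      ultimately show ?thesis by (simp add: c0_def)
    qed
  qed
  have "f (\<lambda>i. \<Sum>j<n. \<alpha> j * w (j, i)) =
      (\<Sum>e\<in>{e. pol_coeff m n f w e \<noteq> 0}. pol_coeff m n f w e * (\<Prod>j<n. \<alpha> j ^ e j))"
    using ident by (rule spec)
  also have "\<dots> = f (\<lambda>_. 0)" unfolding eq by (rule sum_c0)
  finally show ?thesis .
qed


lemma relation_exists:
  fixes \<rho> :: "(nat \<Rightarrow> 'k::field_char_0) \<Rightarrow> nat \<Rightarrow> nat \<Rightarrow> 'k"
    and A :: "(nat \<Rightarrow> int) \<Rightarrow> nat \<Rightarrow> nat \<Rightarrow> 'k"
  assumes finS: "finite S" and Sz: "\<forall>a\<in>S. \<forall>i\<ge>r. a i = 0"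
    and P1: "\<forall>t\<in>torus r. \<forall>i<m. \<forall>j<m. \<rho> t i j = (\<Sum>a\<in>S. torus_char r a t * A a i j)"
    and dp: "w \<in> dsum_points n m" and Fi: "F \<in> invariants r m \<rho> n" and ne: "F w \<noteq> F (\<lambda>_. 0)"
    and wl_def: "wl = (\<lambda>b (p, i). \<Sum>j<m. A b i j * w (p, j))"
    and S'_def: "S' = {b\<in>S. \<exists>p<n. \<exists>i<m. wl b (p, i) \<noteq> 0}"
  shows "\<exists>e. (\<lambda>i. \<Sum>b\<in>S'. int (e b) * b i) = (\<lambda>_. 0) \<and> (\<exists>b\<in>S'. e b \<noteq> 0)"
proof -
  have S'S: "S' \<subseteq> S" unfolding S'_def by blast
  have finS': "finite S'" using finite_subset[OF S'S finS] .
  have pF: "polyfun (dsum_index n m) F" using Fi unfolding invariants_def by simp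
  have invF: "\<forall>t\<in>torus r. \<forall>w. F (diag_act m \<rho> t w) = F w" using Fi unfolding invariants_def by simp
  define \<phi> where "\<phi> z = F (\<lambda>q. \<Sum>b\<in>S'. z b * wl b q)" for z :: "(nat \<Rightarrow> int) \<Rightarrow> 'k"
  have p\<phi>: "polyfun S' \<phi>"
    unfolding \<phi>_def
    by (rule polyfun_compose[OF pF]) (intro polyfun_sum polyfun_mult polyfun_var polyfun_const finS')
  then obtain E c where E: "finite E" "\<forall>e\<in>E. \<forall>b. b \<notin> S' \<longrightarrow> e b = 0"
    "\<forall>z. \<phi> z = (\<Sum>e\<in>E. c e * (\<Prod>b\<in>S'. z b ^ e b))"
    unfolding polyfun_def by blast
  define \<mu> where "\<mu> e = (\<lambda>i. \<Sum>b\<in>S'. int (e b) * b i)" for e :: "(nat \<Rightarrow> int) \<Rightarrow> nat"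
  have act_eq: "F w = (\<Sum>e\<in>E. c e * torus_char r (\<mu> e) t)" if t: "t \<in> torus r" for t
  proof -
    have "F w = F (diag_act m \<rho> t w)" using invF t by simp
    also have "\<dots> = \<phi> (\<lambda>b. torus_char r b t)"
      unfolding \<phi>_def
    proof (rule polyfun_local[OF pF])
      fix q assume "q \<in> dsum_index n m"
      then obtain p i where q: "q = (p, i)" "p < n" "i < m" unfolding dsum_index_def by blast
      have "diag_act m \<rho> t w q = (\<Sum>j<m. \<rho> t i j * w (p, j))" by (simp add: diag_act_def q)
      also have "\<dots> = (\<Sum>j<m. (\<Sum>a\<in>S. torus_char r a t * A a i j) * w (p, j))"
        using P1 t q by simp
      also have "\<dots> = (\<Sum>a\<in>S. torus_char r a t * wl a q)"
        by (simp add: wl_def q sum_distrib_right sum_distrib_left mult.assoc sum.swap[of _ "{..<m}"])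
      also have "\<dots> = (\<Sum>a\<in>S'. torus_char r a t * wl a q)"
      proof (rule sum.mono_neutral_right[OF finS S'S], rule ballI)
        fix a assume "a \<in> S - S'"
        then have "wl a (p, i) = 0" using q unfolding S'_def by blast
        then show "torus_char r a t * wl a q = 0" using q by simp
      qed
      finally show "diag_act m \<rho> t w q = (\<Sum>b\<in>S'. torus_char r b t * wl b q)" .
    qed
    also have "\<dots> = (\<Sum>e\<in>E. c e * (\<Prod>b\<in>S'. torus_char r b t ^ e b))" using E(3) by simp
    also have "\<dots> = (\<Sum>e\<in>E. c e * torus_char r (\<mu> e) t)"
      by (rule sum.cong[OF refl]) (simp add: char_prod[OF t finS'] \<mu>_def)
    finally show ?thesis .
  qed
  have F0: "F (\<lambda>_. 0) = (\<Sum>e\<in>{e\<in>E. \<forall>b\<in>S'. e b = 0}. c e)"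
  proof -
    have "F (\<lambda>_. 0) = \<phi> (\<lambda>_. 0)" by (simp add: \<phi>_def)
    also have "\<dots> = (\<Sum>e\<in>E. c e * (\<Prod>b\<in>S'. (0::'k) ^ e b))" using E(3) by simp
    also have "\<dots> = (\<Sum>e\<in>E. if \<forall>b\<in>S'. e b = 0 then c e else 0)"
      by (rule sum.cong[OF refl]) (simp add: zero_pow_prod[OF finS'])
    also have "\<dots> = (\<Sum>e\<in>{e\<in>E. \<forall>b\<in>S'. e b = 0}. c e)"
      by (rule sum.inter_filter[OF E(1), symmetric])
    finally show ?thesis .
  qed
  define M where "M = insert (\<lambda>_. 0) (\<mu> ` E)"
  define d where "d \<nu> = (\<Sum>e\<in>{e\<in>E. \<mu> e = \<nu>}. c e) - (if \<nu> = (\<lambda>_. 0) then F w else 0)" for \<nu>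
  have "\<forall>\<nu>\<in>M. d \<nu> = 0"
  proof (rule char_indep)
    show "finite M" unfolding M_def using E(1) by simp
    show "\<forall>a\<in>M. \<forall>i\<ge>r. a i = 0"
    proof (intro ballI allI impI)
      fix a i assume a: "a \<in> M" and i: "r \<le> i"
      show "a i = 0"
      proof (cases "a = (\<lambda>_. 0)")
        case True then show ?thesis by simp
      next
        case False
        then obtain e where "a = \<mu> e" using a unfolding M_def by blast
        moreover have bz: "b i = 0" if "b \<in> S'" for b using Sz S'S that i by blast
        have "(\<Sum>b\<in>S'. int (e b) * b i) = 0" by (rule sum.neutral) (simp add: bz)
        ultimately show ?thesis by (simp add: \<mu>_def)
      qed
    qed
    show "\<forall>t\<in>torus r. (\<Sum>\<nu>\<in>M. d \<nu> * torus_char r \<nu> t) = 0"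
    proof
      fix t :: "nat \<Rightarrow> 'k" assume t: "t \<in> torus r"
      have 1: "(\<Sum>\<nu>\<in>M. (\<Sum>e\<in>{e\<in>E. \<mu> e = \<nu>}. c e) * torus_char r \<nu> t) = F w"
      proof -
        have "(\<Sum>\<nu>\<in>M. (\<Sum>e\<in>{e\<in>E. \<mu> e = \<nu>}. c e) * torus_char r \<nu> t) =
            (\<Sum>\<nu>\<in>\<mu> ` E. (\<Sum>e\<in>{e\<in>E. \<mu> e = \<nu>}. c e) * torus_char r \<nu> t)"
        proof (rule sum.mono_neutral_right)
          show "finite M" unfolding M_def using E(1) by simp
          show "\<mu> ` E \<subseteq> M" unfolding M_def by blast
          show "\<forall>i\<in>M - \<mu> ` E. (\<Sum>e\<in>{e\<in>E. \<mu> e = i}. c e) * torus_char r i t = 0"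
          proof
            fix \<nu> assume "\<nu> \<in> M - \<mu> ` E"
            then have "{e\<in>E. \<mu> e = \<nu>} = {}" by blast
            then show "(\<Sum>e\<in>{e\<in>E. \<mu> e = \<nu>}. c e) * torus_char r \<nu> t = 0"
              by (simp only: sum.empty mult_zero_left)
          qed
        qed
        also have "\<dots> = (\<Sum>\<nu>\<in>\<mu> ` E. (\<Sum>e\<in>{e\<in>E. \<mu> e = \<nu>}. c e * torus_char r (\<mu> e) t))"
          by (rule sum.cong[OF refl]) (simp add: sum_distrib_right)
        also have "\<dots> = (\<Sum>e\<in>E. c e * torus_char r (\<mu> e) t)"
          by (rule sum.image_gen[OF E(1), symmetric])
        also have "\<dots> = F w" using act_eq[OF t] by simp
        finally show ?thesis .
      qed
      have 2: "(\<Sum>\<nu>\<in>M. (if \<nu> = (\<lambda>_. 0) then F w else 0) * torus_char r \<nu> t) = F w"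
      proof -
        have "(\<Sum>\<nu>\<in>M. (if \<nu> = (\<lambda>_. 0) then F w else 0) * torus_char r \<nu> t) =
            (\<Sum>\<nu>\<in>M. if \<nu> = (\<lambda>_. 0) then F w * torus_char r \<nu> t else 0)"
          by (rule sum.cong[OF refl]) simp
        also have "\<dots> = F w * torus_char r (\<lambda>_. 0) t"
          using sum.delta[of M "\<lambda>_. 0" "\<lambda>\<nu>. F w * torus_char r \<nu> t"] E(1)
          unfolding M_def by simp
        also have "\<dots> = F w" by (simp add: torus_char_def)
        finally show ?thesis .
      qed
      have "(\<Sum>\<nu>\<in>M. d \<nu> * torus_char r \<nu> t) =
          (\<Sum>\<nu>\<in>M. (\<Sum>e\<in>{e\<in>E. \<mu> e = \<nu>}. c e) * torus_char r \<nu> t) -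
          (\<Sum>\<nu>\<in>M. (if \<nu> = (\<lambda>_. 0) then F w else 0) * torus_char r \<nu> t)"
        unfolding d_def sum_subtractf[symmetric] by (rule sum.cong[OF refl]) (simp add: left_diff_distrib)
      also have "\<dots> = 0" unfolding 1 2 by simp
      finally show "(\<Sum>\<nu>\<in>M. d \<nu> * torus_char r \<nu> t) = 0" .
    qed
  qed
  then have "d (\<lambda>_. 0) = 0" unfolding M_def by blast
  then have Fw: "F w = (\<Sum>e\<in>{e\<in>E. \<mu> e = (\<lambda>_. 0)}. c e)" by (simp add: d_def)
  show ?thesis
  proof (rule ccontr)
    assume nrel: "\<not> ?thesis"
    have "{e\<in>E. \<mu> e = (\<lambda>_. 0)} = {e\<in>E. \<forall>b\<in>S'. e b = 0}"
    proof (rule Collect_cong, rule conj_cong[OF refl])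
      fix e
      show "(\<mu> e = (\<lambda>_. 0)) = (\<forall>b\<in>S'. e b = 0)"
      proof
        assume "\<mu> e = (\<lambda>_. 0)"
        then show "\<forall>b\<in>S'. e b = 0" using nrel unfolding \<mu>_def by blast
      next
        assume "\<forall>b\<in>S'. e b = 0"
        then show "\<mu> e = (\<lambda>_. 0)" unfolding \<mu>_def by (simp add: fun_eq_iff)
      qed
    qed
    then have "F w = F (\<lambda>_. 0)" using Fw F0 by simp
    then show False using ne by simp
  qed
qed


lemma P_sub_N:
  fixes \<rho> :: "(nat \<Rightarrow> 'k::field_char_0) \<Rightarrow> nat \<Rightarrow> nat \<Rightarrow> 'k"
  assumes rep: "rational_rep r m \<rho>" and w: "w \<in> pol_nullcone r m \<rho> n"
  shows "w \<in> nullcone r m \<rho> n"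
proof -
  obtain S and A :: "(nat \<Rightarrow> int) \<Rightarrow> nat \<Rightarrow> nat \<Rightarrow> 'k" where finS: "finite S"
    and Sz: "\<forall>a\<in>S. \<forall>i\<ge>r. a i = 0"
    and P1: "\<forall>t\<in>torus r. \<forall>i<m. \<forall>j<m. \<rho> t i j = (\<Sum>a\<in>S. torus_char r a t * A a i j)"
    and P3: "\<forall>a\<in>S. \<forall>t\<in>torus r. \<forall>i<m. \<forall>l<m. (\<Sum>j<m. A a i j * \<rho> t j l) = torus_char r a t * A a i l"
    using weight_decomp[OF rep] by (elim exE conjE) blast
  have dp: "w \<in> dsum_points n m" using w unfolding pol_nullcone_def by simp
  have "\<forall>F\<in>invariants r m \<rho> n. F w = F (\<lambda>_. 0)"
  proof (rule ballI, rule ccontr)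
    fix F assume Fi: "F \<in> invariants r m \<rho> n" and ne: "F w \<noteq> F (\<lambda>_. 0)"
    define wl where "wl = (\<lambda>b (p, i). \<Sum>j<m. A b i j * w (p, j))"
    define S' where "S' = {b\<in>S. \<exists>p<n. \<exists>i<m. wl b (p, i) \<noteq> 0}"
    obtain e where rel: "(\<lambda>i. \<Sum>b\<in>S'. int (e b) * b i) = (\<lambda>_. 0)" and b0: "\<exists>b\<in>S'. e b \<noteq> 0"
      using relation_exists[OF finS Sz P1 dp Fi ne wl_def S'_def] by blast
    have S'S: "S' \<subseteq> S" unfolding S'_def by blast
    have finS': "finite S'" using finite_subset[OF S'S finS] .
    define pi where "pi b = (SOME q. fst q < n \<and> snd q < m \<and> wl b q \<noteq> 0)" for b
    have piP: "fst (pi b) < n \<and> snd (pi b) < m \<and> wl b (pi b) \<noteq> 0" if "b \<in> S'" for b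
    proof -
      from that obtain p i where "p < n" "i < m" "wl b (p, i) \<noteq> 0" unfolding S'_def by blast
      then have "\<exists>q. fst q < n \<and> snd q < m \<and> wl b q \<noteq> 0" by (intro exI[of _ "(p, i)"]) simp
      then show ?thesis unfolding pi_def by (rule someI_ex)
    qed
    define ii where "ii b = snd (pi b)" for b
    define pp where "pp b = fst (pi b)" for b
    define lf where "lf b v = (\<Sum>j<m. A b (ii b) j * v j)" for b and v :: "nat \<Rightarrow> 'k"
    define f where "f v = (\<Prod>b\<in>S'. lf b v ^ e b)" for v
    have lf_act: "lf b (act m \<rho> t v) = torus_char r b t * lf b v" if b: "b \<in> S'" and t: "t \<in> torus r" for b t v
    proof -
      have iim: "ii b < m" using piP[OF b] unfolding ii_def by simp
      have bS: "b \<in> S" using b S'S by blast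
      have "lf b (act m \<rho> t v) = (\<Sum>j<m. \<Sum>l<m. A b (ii b) j * \<rho> t j l * v l)"
        by (simp add: lf_def act_def sum_distrib_left mult.assoc)
      also have "\<dots> = (\<Sum>l<m. (\<Sum>j<m. A b (ii b) j * \<rho> t j l) * v l)"
        by (subst sum.swap) (simp add: sum_distrib_right)
      also have "\<dots> = (\<Sum>l<m. torus_char r b t * A b (ii b) l * v l)"
        using P3 bS t iim by simp
      also have "\<dots> = torus_char r b t * lf b v"
        by (simp add: lf_def sum_distrib_left mult.assoc)
      finally show ?thesis .
    qed
    have f_inv: "f \<in> invariants_V r m \<rho>"
      unfolding invariants_V_def
    proof (intro CollectI conjI ballI allI)
      show "polyfun {..<m} f" unfolding f_def lf_def
        by (intro polyfun_prod polyfun_power polyfun_sum polyfun_mult polyfun_const polyfun_var) auto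
      fix t :: "nat \<Rightarrow> 'k" and v assume t: "t \<in> torus r"
      have "f (act m \<rho> t v) = (\<Prod>b\<in>S'. (torus_char r b t * lf b v) ^ e b)"
        unfolding f_def by (rule prod.cong[OF refl]) (simp add: lf_act t)
      also have "\<dots> = (\<Prod>b\<in>S'. torus_char r b t ^ e b) * f v"
        by (simp add: f_def power_mult_distrib prod.distrib)
      also have "(\<Prod>b\<in>S'. torus_char r b t ^ e b) = 1"
        unfolding char_prod[OF t finS'] rel by (simp add: torus_char_def)
      finally show "f (act m \<rho> t v) = f v" by simp
    qed
    have f0: "f (\<lambda>_. 0) = 0"
    proof -
      have "f (\<lambda>_. 0) = (\<Prod>b\<in>S'. (0::'k) ^ e b)" by (simp add: f_def lf_def)
      also have "\<dots> = 0" using b0 by (simp add: zero_pow_prod[OF finS'])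
      finally show ?thesis .
    qed
    define \<beta> where "\<beta> b j = wl b (j, ii b)" for b j
    define q where "q = (\<Prod>b\<in>S'. (\<Sum>j<n. monom (\<beta> b j) j) ^ e b)"
    have qne: "q \<noteq> 0"
    proof -
      have "(\<Sum>j<n. monom (\<beta> b j) j) \<noteq> 0" if b: "b \<in> S'" for b
      proof
        assume z: "(\<Sum>j<n. monom (\<beta> b j) j) = 0"
        have ppn: "pp b < n" using piP[OF b] unfolding pp_def by simp
        have "coeff (\<Sum>j<n. monom (\<beta> b j) j) (pp b) = (\<Sum>j<n. if j = pp b then \<beta> b j else 0)"
          by (simp add: coeff_sum coeff_monom)
        also have "\<dots> = \<beta> b (pp b)" using ppn by simp
        also have "\<dots> \<noteq> 0" using piP[OF b] unfolding \<beta>_def pp_def ii_def by simp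
        finally show False using z by simp
      qed
      then show ?thesis unfolding q_def using finS' by (simp add: prod_zero_iff)
    qed
    have "finite {x. poly q x = 0}" by (rule poly_roots_finite[OF qne])
    then have "{x. poly q x = 0} \<noteq> UNIV" using infinite_UNIV_char_0[where 'a='k] by metis
    then obtain s where s: "poly q s \<noteq> 0" by blast
    define \<alpha> where "\<alpha> j = s ^ j" for j
    have "f (\<lambda>i. \<Sum>j<n. \<alpha> j * w (j, i)) = poly q s"
    proof -
      have "lf b (\<lambda>i. \<Sum>j<n. \<alpha> j * w (j, i)) = poly (\<Sum>j<n. monom (\<beta> b j) j) s" for b
      proof -
        have "lf b (\<lambda>i. \<Sum>j<n. \<alpha> j * w (j, i)) = (\<Sum>l<m. \<Sum>j<n. A b (ii b) l * (\<alpha> j * w (j, l)))"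
          by (simp add: lf_def sum_distrib_left)
        also have "\<dots> = (\<Sum>j<n. \<Sum>l<m. \<alpha> j * (A b (ii b) l * w (j, l)))"
          by (subst sum.swap) (simp add: algebra_simps)
        also have "\<dots> = (\<Sum>j<n. \<beta> b j * s ^ j)"
          by (simp add: \<beta>_def wl_def \<alpha>_def sum_distrib_left mult.commute)
        also have "\<dots> = poly (\<Sum>j<n. monom (\<beta> b j) j) s"
          by (simp add: poly_sum poly_monom)
        finally show ?thesis .
      qed
      then show ?thesis unfolding f_def q_def by (simp add: poly_prod)
    qed
    moreover have "f (\<lambda>i. \<Sum>j<n. \<alpha> j * w (j, i)) = f (\<lambda>_. 0)" by (rule P_lin[OF w f_inv])
    ultimately show False using s f0 by simp
  qed
  then show ?thesis unfolding nullcone_def using dp by simp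
qed

theorem theorem3p10:
  fixes r m :: nat and \<rho> :: "(nat \<Rightarrow> 'k::field_char_0) \<Rightarrow> nat \<Rightarrow> nat \<Rightarrow> 'k"
  assumes "alg_closed TYPE('k)"
    and "rational_rep r m \<rho>"
  shows "pol_ind r m \<rho> = \<infinity>"
proof (rule pol_ind_top)
  fix n :: nat assume "n \<ge> 1"
  show "nullcone r m \<rho> n = pol_nullcone r m \<rho> n"
    using N_sub_P[of _ r m \<rho> n] P_sub_N[OF assms(2), of _ n] by blast
qed

end
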